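(* Let $f_{N_2N_1}(x)=\left(\frac{\sqrt x+1}{2}\right)\sqrt{\frac{x+1}{2}}-\left(\frac{\sqrt x+1}{2}\right)^2$ for $x\in(0,\infty)$, let $f_{N_2N_1}^*(u)=u\,f_{N_2N_1}\!\left(\frac{1-u}{u}\right)$ for $u\in(0,1)$, extended by continuity to $[0,1]$ (explicitly $f_{N_2N_1}^*(u)=\frac{\sqrt2}{4}\left(\sqrt u+\sqrt{1-u}\right)-\frac14\left(1+2\sqrt{u(1-u)}\right)$), and define $\overline M_{N_2N_1}(C_1,C_2)=E_X\{f_{N_2N_1}^*(P(C_2\mid x))\}$. Then $$P_e\le \frac12\left[1-\frac{4}{2\sqrt2-1}\,\overline M_{N_2N_1}(C_1,C_2)\right].$$
   Context: Two-class decision problem: classes $C_1,C_2$, an observation $x$ in a space $\mathrm X$ with density $p(x)$, and a posteriori probabilities $P(C_1\mid x),P(C_2\mid x)\ge0$ with $P(C_1\mid x)+P(C_2\mid x)=1$. $E_X\{g(x)\}=\int_{\mathrm X} g(x)p(x)\,dx$. $P_e=E_X\{\min(P(C_1\mid x),P(C_2\mid x))\}$ is the Bayesian probability of error. *)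

theory Defs
  imports "HOL-Probability.Probability"
begin

definition f_N2N1 :: "real \<Rightarrow> real" where
  "f_N2N1 x = ((sqrt x + 1) / 2) * sqrt ((x + 1) / 2) - ((sqrt x + 1) / 2)^2"

text \<open>u * f((1-u)/u) on (0,1), extended by continuity to [0,1]
  (the limit at both endpoints is (sqrt 2 - 1)/4).\<close>
definition fstar_N2N1 :: "real \<Rightarrow> real" where
  "fstar_N2N1 u = (if 0 < u \<and> u < 1 then u * f_N2N1 ((1 - u) / u) else (sqrt 2 - 1) / 4)"

definition E_X :: "('a::euclidean_space \<Rightarrow> real) \<Rightarrow> ('a \<Rightarrow> real) \<Rightarrow> real" where
  "E_X p g = (\<integral>x. g x * p x \<partial>lborel)"

definition Pe :: "('a::euclidean_space \<Rightarrow> real) \<Rightarrow> ('a \<Rightarrow> real) \<Rightarrow> ('a \<Rightarrow> real) \<Rightarrow> real" where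
  "Pe p P1 P2 = E_X p (\<lambda>x. min (P1 x) (P2 x))"

definition Mbar_N2N1 :: "('a::euclidean_space \<Rightarrow> real) \<Rightarrow> ('a \<Rightarrow> real) \<Rightarrow> ('a \<Rightarrow> real) \<Rightarrow> real" where
  "Mbar_N2N1 p P1 P2 = E_X p (\<lambda>x. fstar_N2N1 (P2 x))"

end

theory Submission
  imports Defs
begin

lemma key: fixes a b r :: real assumes "0\<le>a" "a\<le>b" "a^2+b^2=1" "r>0" "r^2=2"
  shows "(b-a)*(2*r-1)+a+b \<ge> r"
proof -
  define d s where "d = b-a" and "s = a+b"
  have d0: "d \<ge> 0" "s \<ge> 0" using assms by (auto simp: d_def s_def)
  have ds: "s^2 + d^2 = 2" using assms(3) unfolding d_def s_def by (simp add: power2_eq_square algebra_simps)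
  have r1: "r \<ge> 1"
  proof (rule ccontr)
    assume "\<not> r \<ge> 1" then have "r^2 \<le> 1^2" using assms(4) by (intro power_mono) auto
    thus False using assms(5) by simp
  qed
  have sr: "s \<le> r"
  proof (rule ccontr)
    assume "\<not> s \<le> r" then have "s^2 > r^2" using assms(4) by (intro power_strict_mono) auto
    moreover have "d^2 \<ge> 0" by simp
    ultimately show False using ds assms(5) by linarith
  qed
  have dd: "d^2 = (r-s)*(r+s)" using ds assms(5) by (simp add: algebra_simps power2_eq_square)
  have e1: "(2*r-1)^2 \<ge> 1^2" using r1 by (intro power_mono) auto
  have "(r+s)*(2*r-1)^2 \<ge> (r+s)*1" using e1 d0 r1 by (intro mult_left_mono) auto
  hence "(r+s)*(2*r-1)^2 \<ge> r + s" by (simp only: mult_1_right)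
  hence "(r+s)*(2*r-1)^2 \<ge> r - s" using d0 by linarith
  hence A: "(r-s)*((r+s)*(2*r-1)^2) \<ge> (r-s)*(r-s)" using sr by (intro mult_left_mono) auto
  have B: "(d*(2*r-1))^2 = (r-s)*((r+s)*(2*r-1)^2)" using dd by (simp add: power_mult_distrib)
  have C: "(r-s)^2 = (r-s)*(r-s)" by (simp add: power2_eq_square)
  have "(d*(2*r-1))^2 \<ge> (r-s)^2" by (subst B, subst C, rule A)
  moreover have "0 \<le> d*(2*r-1)" using d0 r1 by (intro mult_nonneg_nonneg) linarith+
  ultimately have "d*(2*r-1) \<ge> r - s" by (rule power2_le_imp_le)
  thus ?thesis unfolding d_def s_def by simp
qed

definition gN :: "real \<Rightarrow> real" where
  "gN u = sqrt 2/4*(sqrt u + sqrt (1-u)) - 1/4*(1 + 2* sqrt u* sqrt (1-u))"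

lemma fstar_eq: assumes "0 \<le> u" "u \<le> 1" shows "fstar_N2N1 u = gN u"
proof (cases "0 < u \<and> u < 1")
  case True
  define a b where "a = sqrt u" and "b = sqrt (1-u)"
  have a0: "a > 0" using True by (simp add: a_def)
  have ua: "u = a^2" using assms by (simp add: a_def)
  have ub: "1 - u = b^2" using assms by (simp add: b_def)
  have h1: "sqrt ((1-u)/u) = b/a" by (simp add: a_def b_def real_sqrt_divide)
  have h2: "((1-u)/u + 1)/2 = 1/(2*u)" using True by (simp add: field_simps)
  have h3: "sqrt (1/(2*u)) = 1/(sqrt 2 * a)" by (simp add: a_def real_sqrt_divide real_sqrt_mult)
  have "fstar_N2N1 u = u * (((sqrt ((1-u)/u) + 1) / 2) * sqrt (((1-u)/u + 1) / 2) - ((sqrt ((1-u)/u) + 1) / 2)^2)"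
    using True by (simp add: fstar_N2N1_def f_N2N1_def)
  also have "\<dots> = u * (((b/a+1)/2) * (1/(sqrt 2 * a)) - ((b/a+1)/2)^2)"
    by (simp only: h1 h2 h3)
  also have "\<dots> = a^2 * (((b/a+1)/2) * (1/(sqrt 2 * a)) - ((b/a+1)/2)^2)" using ua by simp
  also have "\<dots> = (a+b)/(2* sqrt 2) - (a^2 + b^2 + 2*a*b)/4" using a0
    by (simp add: field_simps power2_eq_square)
  also have "\<dots> = gN u"
  proof -
    have "(a+b)/(2* sqrt 2) = sqrt 2/4*(a+b)"
      by (simp add: field_simps)
    moreover have "a^2 + b^2 = 1" using ua ub by simp
    moreover have "gN u = sqrt 2/4*(a+b) - 1/4*(1 + 2*a*b)" by (simp add: gN_def a_def b_def)
    ultimately show ?thesis by simp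
  qed
  finally show ?thesis .
next
  case False
  then have "u = 0 \<or> u = 1" using assms by auto
  moreover have "fstar_N2N1 0 = (sqrt 2 - 1)/4" by (simp add: fstar_N2N1_def)
  moreover have "fstar_N2N1 1 = (sqrt 2 - 1)/4" by (simp add: fstar_N2N1_def)
  moreover have "gN 0 = (sqrt 2 - 1)/4" by (simp add: gN_def diff_divide_distrib)
  moreover have "gN 1 = (sqrt 2 - 1)/4" by (simp add: gN_def diff_divide_distrib)
  ultimately show ?thesis by auto
qed

lemma key2: fixes a b :: real assumes "0\<le>a" "a\<le>b" "a^2+b^2=1"
  shows "a^2 \<le> 1/2 - 2/(2* sqrt 2-1)*(sqrt 2/4*(a+b) - 1/4*(1+2*a*b))"
proof -
  define r where "r = sqrt 2"
  have r: "r > 0" "r^2 = 2" by (auto simp: r_def)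
  have r1: "2*r - 1 > 0" unfolding r_def using real_sqrt_ge_one[of 2] by linarith
  have k: "(b-a)*(2*r-1)+a+b \<ge> r" using key[OF assms r] .
  define s where "s = a + b"
  have s0: "s \<ge> 0" using assms unfolding s_def by linarith
  have P: "s*((b-a)*(2*r-1)) \<ge> s*(r - s)" proof -
    have "r - s \<le> (b-a)*(2*r-1)" using k unfolding s_def by linarith
    thus ?thesis using s0 by (intro mult_left_mono)
  qed
  have Q: "s*(b-a) = 1 - 2*a^2" using assms(3) unfolding s_def by (simp add: algebra_simps power2_eq_square)
  have P1: "s*((b-a)*(2*r-1)) = (1 - 2*a^2)*(2*r-1)" using Q by (metis mult.assoc)
  have P2: "s*(r-s) = s*r - s^2" by (simp add: algebra_simps power2_eq_square)
  have T0: "(1-2*a^2)*(2*r-1) \<ge> s*r - s^2" using P P1 P2 by linarith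
  define Z where "Z = (s*r - s^2)/(2*r-1)"
  have T: "Z \<le> 1-2*a^2" using T0 r1 unfolding Z_def by (simp add: pos_divide_le_eq)
  have S: "1 + 2*a*b = s^2" using assms(3) unfolding s_def by (simp add: algebra_simps power2_eq_square)
  have U: "2/(2*r-1)*(r/4* s - 1/4*(s^2)) = Z/2"
    using r1 unfolding Z_def by (simp add: field_simps)
  have "a^2 \<le> 1/2 - 2/(2*r-1)*(r/4* s - 1/4*(s^2))" using T U by linarith
  thus ?thesis unfolding r_def[symmetric] s_def[symmetric] S .
qed

lemma pointwise: assumes "0 \<le> u" "u \<le> 1"
  shows "min (1-u) u \<le> 1/2 - 2/(2* sqrt 2-1) * gN u"
proof -
  define a b where "a = sqrt u" and "b = sqrt (1-u)"
  have ab: "a \<ge> 0" "b \<ge> 0" "a^2 + b^2 = 1" "a^2 = u" "b^2 = 1-u" using assms by (auto simp: a_def b_def)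
  have g: "gN u = sqrt 2/4*(a+b) - 1/4*(1+2*a*b)" by (simp add: gN_def a_def b_def)
  show ?thesis
  proof (cases "a \<le> b")
    case True
    have "u \<le> 1/2 - 2/(2* sqrt 2-1) * gN u" using key2[OF ab(1) True ab(3)] ab g by simp
    thus ?thesis by linarith
  next
    case False
    have K: "b^2 \<le> 1/2 - 2/(2* sqrt 2-1)*(sqrt 2/4*(b+a) - 1/4*(1+2*b*a))"
      using key2[of b a] ab False by simp
    have g': "gN u = sqrt 2/4*(b+a) - 1/4*(1+2*b*a)" using g by (simp add: algebra_simps)
    have "b^2 \<le> 1/2 - 2/(2* sqrt 2-1) * gN u" by (subst g') (rule K)
    hence "1-u \<le> 1/2 - 2/(2* sqrt 2-1) * gN u" using ab by simp
    thus ?thesis by linarith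
  qed
qed

lemma gN_bound_aux: fixes S P :: real assumes "S \<le> 2*2" "0 \<le> S" "P \<le> 1" "0 \<le> P" shows "\<bar>S/4 - 1/4*(1+2*P)\<bar> \<le> 2"
  using assms by (simp add: abs_le_iff field_simps)

lemma gN_bound: assumes "0 \<le> u" "u \<le> 1" shows "\<bar>gN u\<bar> \<le> 2"
proof -
  define a b where "a = sqrt u" and "b = sqrt (1-u)"
  have a: "a \<le> 1" "a \<ge> 0" using assms by (auto simp: a_def)
  have b: "b \<le> 1" "b \<ge> 0" using assms by (auto simp: b_def)
  have r: "sqrt 2 \<le> 2"
  proof -
    have "sqrt 2 \<le> sqrt ((2::real)^2)" by (subst real_sqrt_le_iff) simp
    thus ?thesis by (simp only: real_sqrt_abs)
  qed
  have ab: "a*b \<le> 1" "a*b \<ge> 0" using a b by (auto simp: mult_le_one)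
  have s: "sqrt 2 * (a+b) \<le> 2*2" using r a b by (intro mult_mono) auto
  have s0: "sqrt 2 * (a+b) \<ge> 0" using a b by auto
  have g: "gN u = sqrt 2 * (a+b)/4 - 1/4*(1 + 2*(a*b))" by (simp add: gN_def a_def b_def)
  show ?thesis unfolding g using gN_bound_aux[OF s s0 ab] .
qed

theorem mainTheorem10:
  fixes p P1 P2 :: "'a::euclidean_space \<Rightarrow> real"
  assumes p_meas: "p \<in> borel_measurable lborel"
    and p_nonneg: "\<And>x. p x \<ge> 0"
    and p_int: "integrable lborel p"
    and p_one: "(\<integral>x. p x \<partial>lborel) = 1"
    and P1_meas: "P1 \<in> borel_measurable lborel"
    and P2_meas: "P2 \<in> borel_measurable lborel"
    and P_nonneg: "\<And>x. P1 x \<ge> 0 \<and> P2 x \<ge> 0"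
    and P_sum: "\<And>x. P1 x + P2 x = 1"
  shows "Pe p P1 P2 \<le> 1/2 * (1 - 4 / (2 * sqrt 2 - 1) * Mbar_N2N1 p P1 P2)"
proof -
  have P2r: "0 \<le> P2 x" "P2 x \<le> 1" for x using P_nonneg[of x] P_sum[of x] by auto
  have P1e: "P1 x = 1 - P2 x" for x using P_sum[of x] by simp
  have fe: "(\<lambda>x. fstar_N2N1 (P2 x) * p x) = (\<lambda>x. gN (P2 x) * p x)"
    using fstar_eq P2r by auto
  have gm: "(\<lambda>x. gN (P2 x)) \<in> borel_measurable lborel"
    unfolding gN_def using P2_meas by measurable
  have ig: "integrable lborel (\<lambda>x. gN (P2 x) * p x)"
  proof (rule Bochner_Integration.integrable_bound[of _ "\<lambda>x. 2 * p x"])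
    show "integrable lborel (\<lambda>x. 2 * p x)" using p_int by simp
    show "(\<lambda>x. gN (P2 x) * p x) \<in> borel_measurable lborel" using gm p_meas by measurable
    show "AE x in lborel. norm (gN (P2 x) * p x) \<le> norm (2 * p x)"
      using gN_bound P2r p_nonneg by (auto simp: abs_mult intro!: mult_right_mono)
  qed
  have im: "integrable lborel (\<lambda>x. min (P1 x) (P2 x) * p x)"
  proof (rule Bochner_Integration.integrable_bound[of _ "\<lambda>x. p x"])
    show "integrable lborel (\<lambda>x. p x)" using p_int by simp
    show "(\<lambda>x. min (P1 x) (P2 x) * p x) \<in> borel_measurable lborel" using P1_meas P2_meas p_meas by measurable
    show "AE x in lborel. norm (min (P1 x) (P2 x) * p x) \<le> norm (p x)"
    proof (intro AE_I2)
      fix x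
      have m: "0 \<le> min (P1 x) (P2 x)" "min (P1 x) (P2 x) \<le> 1" using P_nonneg[of x] P_sum[of x] by auto
      have "min (P1 x) (P2 x) * p x \<le> 1 * p x" using m p_nonneg[of x] by (intro mult_right_mono) auto
      thus "norm (min (P1 x) (P2 x) * p x) \<le> norm (p x)" using m p_nonneg[of x] by (simp add: abs_mult)
    qed
  qed
  define c where "c = 2/(2* sqrt 2-1)"
  have "Pe p P1 P2 = (\<integral>x. min (P1 x) (P2 x) * p x \<partial>lborel)" by (simp add: Pe_def E_X_def)
  also have "\<dots> \<le> (\<integral>x. (1/2 * p x - c * (gN (P2 x) * p x)) \<partial>lborel)"
  proof (rule integral_mono)
    show "integrable lborel (\<lambda>x. 1/2 * p x - c * (gN (P2 x) * p x))" using ig p_int by simp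
    fix x
    have "min (P1 x) (P2 x) \<le> 1/2 - c * gN (P2 x)"
      using pointwise[OF P2r] P1e unfolding c_def by simp
    hence "min (P1 x) (P2 x) * p x \<le> (1/2 - c * gN (P2 x)) * p x" using p_nonneg by (intro mult_right_mono) auto
    thus "min (P1 x) (P2 x) * p x \<le> 1/2 * p x - c * (gN (P2 x) * p x)" by (simp add: algebra_simps)
  qed (use im in auto)
  also have "\<dots> = 1/2 - c * (\<integral>x. gN (P2 x) * p x \<partial>lborel)"
    using ig p_int p_one by simp
  also have "\<dots> = 1/2 * (1 - 4 / (2 * sqrt 2 - 1) * Mbar_N2N1 p P1 P2)"
    unfolding Mbar_N2N1_def E_X_def fe c_def by (simp add: field_simps)
  finally show ?thesis .
qed

end
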